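(* Let $d\ge1$, $N\ge1$, $T>0$, let $a\ne0$ be real, and let $U:\mathbb{R}^d\to\mathbb{R}^d$, $U(z)=az$. Let $\mathcal{K}:\mathbb{R}^d\to\mathbb{R}^d$ be Lipschitz continuous, and define $\hat K(z)=\mathcal{K}(z/a)$ and $\tilde K(z)=\frac1a\mathcal{K}(z)$. Assume $v_\textup{d}\equiv0$ and let $\hat v[\mu](x)=-\int\hat K(y-x)\,d\mu(y)$, $\tilde v[\mu](x)=-\int\tilde K(y-x)\,d\mu(y)$. (i) For every $\mu\in\mathcal{M}^N_1(\mathbb{R}^d)$ and $x\in\mathbb{R}^d$, $\tilde v[\mu](x)=\frac1a\hat v[U\#\mu](ax)$. Let $\hat\mu_\cdot,\tilde\mu_\cdot\in C([0,T];\mathcal{M}^N_1(\mathbb{R}^d))$ be the solutions of the Cauchy problem with velocities $\hat v$ and $\tilde v$ respectively, with initial data satisfying $\hat\mu_0=U\#\tilde\mu_0$, and let $\hat\gamma_t,\tilde\gamma_t$ be their flow maps. Then: (ii) $\hat\gamma_t=U\circ\tilde\gamma_t\circ U^{-1}$ for all $t\in(0,T]$; (iii) $\hat\mu_t=U\#\tilde\mu_t$ for all $t\in(0,T]$.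
   Context: $\mathcal{M}^N_1(\mathbb{R}^d)$ is the set of positive Borel measures on $\mathbb{R}^d$ with total mass $N$ and finite first moment; $\#$ denotes push-forward. For a velocity field $\mu\mapsto v[\mu]$, a solution of the Cauchy problem $\partial_t\mu_t+\nabla\cdot(\mu_tv[\mu_t])=0$, $\mu_0=\bar\mu$, on $[0,T]$ is a curve $\mu_\cdot\in C([0,T];\mathcal{M}^N_1(\mathbb{R}^d))$ given by $\mu_t=\gamma_t\#\bar\mu$, where the flow map satisfies $\gamma_t(x)=x+\int_0^tv[\mu_s](\gamma_s(x))\,ds$. *)

theory Defs
  imports "HOL-Analysis.Analysis" "HOL-Probability.Probability"
begin

definition M1N :: "real \<Rightarrow> ('a::euclidean_space) measure set" where
  "M1N N = {\<mu>. sets \<mu> = sets borel \<and> emeasure \<mu> UNIV = ennreal N \<and> integrable \<mu> norm}"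

definition pushfwd :: "('a::euclidean_space \<Rightarrow> 'a) \<Rightarrow> 'a measure \<Rightarrow> 'a measure" where
  "pushfwd f \<mu> = distr \<mu> borel f"

text \<open>Wasserstein-1 distance (Kantorovich-Rubinstein dual form) between measures of equal mass.\<close>
definition W1 :: "('a::euclidean_space) measure \<Rightarrow> 'a measure \<Rightarrow> real" where
  "W1 \<mu> \<nu> = (SUP f \<in> {f :: 'a \<Rightarrow> real. 1-lipschitz_on UNIV f}.
               (\<integral>y. f y \<partial>\<mu>) - (\<integral>y. f y \<partial>\<nu>))"

definition conv_vel :: "('a::euclidean_space \<Rightarrow> 'a) \<Rightarrow> 'a measure \<Rightarrow> 'a \<Rightarrow> 'a" where
  "conv_vel K \<mu> x = - (\<integral>y. K (y - x) \<partial>\<mu>)"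

definition is_solution ::
  "real \<Rightarrow> real \<Rightarrow> ('a::euclidean_space measure \<Rightarrow> 'a \<Rightarrow> 'a) \<Rightarrow> 'a measure
     \<Rightarrow> (real \<Rightarrow> 'a measure) \<Rightarrow> (real \<Rightarrow> 'a \<Rightarrow> 'a) \<Rightarrow> bool" where
  "is_solution N T v mubar \<mu> \<gamma> \<longleftrightarrow>
     mubar \<in> M1N N \<and>
     (\<forall>t\<in>{0..T}. \<mu> t \<in> M1N N) \<and>
     (\<forall>t\<in>{0..T}. \<forall>\<epsilon>>0. \<exists>\<delta>>0. \<forall>s\<in>{0..T}. \<bar>s - t\<bar> < \<delta> \<longrightarrow> W1 (\<mu> s) (\<mu> t) < \<epsilon>) \<and>
     (\<forall>t\<in>{0..T}. \<gamma> t \<in> borel_measurable borel) \<and>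
     (\<forall>t\<in>{0..T}. \<mu> t = pushfwd (\<gamma> t) mubar) \<and>
     (\<forall>t\<in>{0..T}. \<forall>x. ((\<lambda>s. v (\<mu> s) (\<gamma> s x)) has_integral (\<gamma> t x - x)) {0..t})"

end

theory Submission
  imports Defs
begin

lemma space_eq_UNIV: "sets m = sets borel \<Longrightarrow> space m = UNIV"
  using sets_eq_imp_space_eq by fastforce

lemma meas_m: "sets m = sets borel \<Longrightarrow> f \<in> borel_measurable borel \<Longrightarrow> f \<in> measurable m borel"
  using measurable_cong_sets[of m borel borel borel] by simp

lemma conv_vel_distr:
  assumes "sets m = sets borel" "f \<in> borel_measurable borel" "Kh \<in> borel_measurable borel"
  shows "conv_vel Kh (distr m borel f) p = - (\<integral>z. Kh (f z - p) \<partial>m)"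
proof -
  have "(\<lambda>y. Kh (y - p)) \<in> borel_measurable borel" using assms(3) by measurable
  then show ?thesis unfolding conv_vel_def
    by (subst integral_distr) (auto intro: meas_m[OF assms(1,2)])
qed

lemma finite_m: "sets m = sets borel \<Longrightarrow> emeasure m UNIV = ennreal N \<Longrightarrow> finite_measure m"
  by (intro finite_measureI) (simp add: space_eq_UNIV)

lemma lip_cont: "(\<And>x y. norm (Kh x - Kh y) \<le> C * norm (x - y)) \<Longrightarrow> continuous_on UNIV Kh"
proof -
  assume h: "\<And>x y. norm (Kh x - Kh y) \<le> C * norm (x - y)"
  have "(max C 0)-lipschitz_on UNIV Kh"
  proof (rule lipschitz_onI)
    fix x y
    have "norm (Kh x - Kh y) \<le> C * norm (x - y)" by (rule h)
    also have "\<dots> \<le> max C 0 * norm (x - y)" by (rule mult_right_mono) auto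
    finally show "dist (Kh x) (Kh y) \<le> max C 0 * dist x y" by (simp add: dist_norm)
  qed simp
  then show ?thesis using lipschitz_on_continuous_on by blast
qed

lemma integrable_K:
  fixes m :: "'a::euclidean_space measure" and Kh f g :: "'a \<Rightarrow> 'a"
  assumes "sets m = sets borel" "emeasure m UNIV = ennreal N"
    and h: "\<And>x y. norm (Kh x - Kh y) \<le> C * norm (x - y)" and C: "C \<ge> 0"
    and f: "f \<in> borel_measurable borel" and fi: "integrable m (\<lambda>z. norm (f z))"
  shows "integrable m (\<lambda>z. Kh (f z - p))"
proof -
  interpret finite_measure m using finite_m assms by blast
  have Kb: "Kh \<in> borel_measurable borel" using lip_cont[OF h] borel_measurable_continuous_onI by blast
  have fm: "f \<in> measurable m borel" using meas_m assms by blast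
  have bi: "integrable m (\<lambda>z. norm (Kh 0) + C * norm p + C * norm (f z))"
    using fi by auto
  have mm: "(\<lambda>z. Kh (f z - p)) \<in> borel_measurable m" using measurable_compose[OF borel_measurable_diff[OF fm borel_measurable_const] Kb] by simp
  have ae: "AE x in m. norm (Kh (f x - p)) \<le> norm (norm (Kh 0) + C * norm p + C * norm (f x))"
    proof (rule AE_I2)
      fix x
      have "norm (Kh (f x - p)) \<le> norm (Kh 0) + norm (Kh (f x - p) - Kh 0)" by (metis norm_triangle_sub add.commute)
      also have "\<dots> \<le> norm (Kh 0) + C * norm (f x - p)" using h[of "f x - p" 0] by simp
      also have "\<dots> \<le> norm (Kh 0) + C * (norm p + norm (f x))"
        using C norm_triangle_ineq4[of "f x" p] by (simp add: mult_left_mono)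
      finally show "norm (Kh (f x - p)) \<le> norm (norm (Kh 0) + C * norm p + C * norm (f x))"
        using C by (simp add: algebra_simps)
    qed
  show ?thesis using Bochner_Integration.integrable_bound[OF bi mm ae] .
qed

lemma vel_diff:
  fixes m :: "'a::euclidean_space measure" and Kh f g :: "'a \<Rightarrow> 'a"
  assumes m: "sets m = sets borel" "emeasure m UNIV = ennreal N" and N: "N \<ge> 0"
    and h: "\<And>x y. norm (Kh x - Kh y) \<le> C * norm (x - y)" and C: "C \<ge> 0"
    and f: "f \<in> borel_measurable borel" and fi: "integrable m (\<lambda>z. norm (f z))"
    and g: "g \<in> borel_measurable borel" and gi: "integrable m (\<lambda>z. norm (g z))"
  shows "norm (conv_vel Kh (distr m borel f) p - conv_vel Kh (distr m borel g) q)
     \<le> C * (\<integral>z. norm (f z - g z) \<partial>m) + C * N * norm (p - q)"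
proof -
  interpret finite_measure m using finite_m m by blast
  have Kb: "Kh \<in> borel_measurable borel" using lip_cont[OF h] borel_measurable_continuous_onI by blast
  have fm: "f \<in> borel_measurable m" and gm: "g \<in> borel_measurable m" using meas_m m f g by blast+
  have fI: "integrable m f" using fi fm integrable_norm_iff by blast
  have gI: "integrable m g" using gi gm integrable_norm_iff by blast
  have dI: "integrable m (\<lambda>z. norm (f z - g z))" using fI gI by auto
  have i1: "integrable m (\<lambda>z. Kh (f z - p))" by (rule integrable_K[OF m h C f fi])
  have i2: "integrable m (\<lambda>z. Kh (g z - q))" by (rule integrable_K[OF m h C g gi])
  have mU: "measure m (space m) = N" using m N by (simp add: space_eq_UNIV measure_def)
  have "conv_vel Kh (distr m borel f) p - conv_vel Kh (distr m borel g) q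
      = (\<integral>z. Kh (g z - q) - Kh (f z - p) \<partial>m)"
    using conv_vel_distr[OF m(1) f Kb] conv_vel_distr[OF m(1) g Kb] i1 i2 by simp
  also have "norm \<dots> \<le> (\<integral>z. C * norm (f z - g z) + C * norm (p - q) \<partial>m)"
  proof (rule Bochner_Integration.integral_norm_bound_integral)
    show "integrable m (\<lambda>z. Kh (g z - q) - Kh (f z - p))" using i1 i2 by auto
    show "integrable m (\<lambda>z. C * norm (f z - g z) + C * norm (p - q))" using dI by auto
    fix z
    have "norm (Kh (g z - q) - Kh (f z - p)) \<le> C * norm ((g z - q) - (f z - p))" by (rule h)
    also have "\<dots> \<le> C * (norm (f z - g z) + norm (p - q))"
    proof (rule mult_left_mono[OF _ C])
      have "(g z - q) - (f z - p) = -((f z - g z) + (q - p))" by (simp add: algebra_simps)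
      then show "norm ((g z - q) - (f z - p)) \<le> norm (f z - g z) + norm (p - q)"
        by (metis norm_minus_cancel norm_minus_commute norm_triangle_ineq)
    qed
    finally show "norm (Kh (g z - q) - Kh (f z - p)) \<le> C * norm (f z - g z) + C * norm (p - q)"
      by (simp add: algebra_simps)
  qed
  also have "\<dots> = C * (\<integral>z. norm (f z - g z) \<partial>m) + C * N * norm (p - q)"
    using dI mU by simp
  finally show ?thesis .
qed

lemma lip1_int_le:
  assumes mu: "\<mu> \<in> M1N N" and nu: "\<nu> \<in> M1N N" and f: "1-lipschitz_on UNIV (f::'a::euclidean_space \<Rightarrow> real)"
  shows "integrable \<mu> f" "(\<integral>y. f y \<partial>\<mu>) - (\<integral>y. f y \<partial>\<nu>) \<le> (\<integral>y. norm y \<partial>\<mu>) + (\<integral>y. norm y \<partial>\<nu>)"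
proof -
  have fl: "\<And>x y. \<bar>f x - f y\<bar> \<le> norm (x - y)"
    using lipschitz_onD[OF f] by (simp add: dist_norm dist_real_def)
  have fb: "f \<in> borel_measurable borel"
    using lipschitz_on_continuous_on[OF f] borel_measurable_continuous_onI by blast
  have gen: "integrable m f \<and> integrable m (\<lambda>y. f y - f 0) \<and> (\<integral>y. f y \<partial>m) = (\<integral>y. f y - f 0 \<partial>m) + measure m UNIV * f 0
      \<and> \<bar>\<integral>y. f y - f 0 \<partial>m\<bar> \<le> (\<integral>y. norm y \<partial>m)" if mm: "m \<in> M1N N" for m
  proof -
    have m1: "sets m = sets borel" "emeasure m UNIV = ennreal N" "integrable m norm"
      using mm by (auto simp: M1N_def)
    interpret finite_measure m using finite_m m1 by blast
    have fm: "f \<in> borel_measurable m" using meas_m m1 fb by blast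
    have i0: "integrable m (\<lambda>y. f y - f 0)"
    proof (rule Bochner_Integration.integrable_bound[OF m1(3)])
      show "(\<lambda>y. f y - f 0) \<in> borel_measurable m" using fm by simp
      show "AE x in m. norm (f x - f 0) \<le> norm (norm x)" using fl[of _ 0] by simp
    qed
    have i1: "integrable m f"
    proof -
      have "integrable m (\<lambda>y. (f y - f 0) + f 0)" by (rule Bochner_Integration.integrable_add[OF i0]) simp
      moreover have "(\<lambda>y. (f y - f 0) + f 0) = f" by auto
      ultimately show ?thesis by simp
    qed
    have eq: "(\<integral>y. f y \<partial>m) = (\<integral>y. f y - f 0 \<partial>m) + measure m UNIV * f 0"
      using i1 by (simp add: space_eq_UNIV[OF m1(1)])
    have "\<bar>\<integral>y. f y - f 0 \<partial>m\<bar> \<le> (\<integral>y. norm y \<partial>m)"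
      using Bochner_Integration.integral_norm_bound_integral[OF i0 m1(3)] fl[of _ 0] by simp
    then show ?thesis using i0 i1 eq by blast
  qed
  show "integrable \<mu> f" using gen[OF mu] by blast
  have "measure \<mu> UNIV = measure \<nu> UNIV" using mu nu by (simp add: M1N_def measure_def)
  then show "(\<integral>y. f y \<partial>\<mu>) - (\<integral>y. f y \<partial>\<nu>) \<le> (\<integral>y. norm y \<partial>\<mu>) + (\<integral>y. norm y \<partial>\<nu>)"
  proof -
    assume e: "measure \<mu> UNIV = measure \<nu> UNIV"
    from gen[OF mu] have a1: "(\<integral>y. f y \<partial>\<mu>) = (\<integral>y. f y - f 0 \<partial>\<mu>) + measure \<mu> UNIV * f 0"
      and a2: "\<bar>\<integral>y. f y - f 0 \<partial>\<mu>\<bar> \<le> (\<integral>y. norm y \<partial>\<mu>)" by blast+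
    from gen[OF nu] have b1: "(\<integral>y. f y \<partial>\<nu>) = (\<integral>y. f y - f 0 \<partial>\<nu>) + measure \<nu> UNIV * f 0"
      and b2: "\<bar>\<integral>y. f y - f 0 \<partial>\<nu>\<bar> \<le> (\<integral>y. norm y \<partial>\<nu>)" by blast+
    from a1 e have a1': "(\<integral>y. f y \<partial>\<mu>) = (\<integral>y. f y - f 0 \<partial>\<mu>) + measure \<nu> UNIV * f 0" by simp
    show ?thesis using a1' a2 b1 b2 by linarith
  qed
qed

lemma W1_ge:
  assumes mu: "\<mu> \<in> M1N N" and nu: "\<nu> \<in> M1N N" and f: "1-lipschitz_on UNIV (f::'a::euclidean_space \<Rightarrow> real)"
  shows "(\<integral>y. f y \<partial>\<mu>) - (\<integral>y. f y \<partial>\<nu>) \<le> W1 \<mu> \<nu>"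
  unfolding W1_def
  apply (rule cSUP_upper)
  using f apply simp
  apply (rule bdd_aboveI2)
  apply (rule lip1_int_le(2)[OF mu nu])
  apply simp
  done

lemma lip_norm: "1-lipschitz_on UNIV (\<lambda>y::'a::real_normed_vector. norm y)"
  by (rule lipschitz_onI) (auto simp: dist_norm dist_real_def norm_triangle_ineq3)

lemma lip_mnorm: "1-lipschitz_on UNIV (\<lambda>y::'a::real_normed_vector. - norm y)"
proof (rule lipschitz_onI)
  fix x y :: 'a
  show "dist (- norm x) (- norm y) \<le> 1 * dist x y"
    using norm_triangle_ineq3[of x y] by (simp add: dist_norm dist_real_def abs_minus_commute)
qed simp

lemma moment_bound:
  assumes "is_solution N T v mubar \<mu> \<gamma>"
  shows "\<exists>B. \<forall>t\<in>{0..T}. (\<integral>y. norm y \<partial>\<mu> t) \<le> B"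
proof (cases "T \<ge> 0")
  case False then show ?thesis by auto
next
  case True
  have M: "\<forall>t\<in>{0..T}. \<mu> t \<in> M1N N"
    and W: "\<forall>t\<in>{0..T}. \<forall>\<epsilon>>0. \<exists>\<delta>>0. \<forall>s\<in>{0..T}. \<bar>s - t\<bar> < \<delta> \<longrightarrow> W1 (\<mu> s) (\<mu> t) < \<epsilon>"
    using assms by (auto simp: is_solution_def)
  have "continuous_on {0..T} (\<lambda>t. \<integral>y. norm y \<partial>\<mu> t)"
    unfolding continuous_on_iff
  proof (intro ballI allI impI)
    fix t and e :: real assume t: "t \<in> {0..T}" and e: "e > 0"
    obtain d where d: "d > 0" "\<forall>s\<in>{0..T}. \<bar>s - t\<bar> < d \<longrightarrow> W1 (\<mu> s) (\<mu> t) < e"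
      using W t e by blast
    show "\<exists>d>0. \<forall>s\<in>{0..T}. dist s t < d \<longrightarrow> dist (\<integral>y. norm y \<partial>\<mu> s) (\<integral>y. norm y \<partial>\<mu> t) < e"
    proof (intro exI conjI ballI impI)
      fix s assume s: "s \<in> {0..T}" "dist s t < d"
      have w: "W1 (\<mu> s) (\<mu> t) < e" using d s by (auto simp: dist_real_def)
      have 1: "(\<integral>y. norm y \<partial>\<mu> s) - (\<integral>y. norm y \<partial>\<mu> t) \<le> W1 (\<mu> s) (\<mu> t)"
        using W1_ge[OF _ _ lip_norm] M s t by blast
      have 2: "(\<integral>y. - norm y \<partial>\<mu> s) - (\<integral>y. - norm y \<partial>\<mu> t) \<le> W1 (\<mu> s) (\<mu> t)"
        using W1_ge[OF _ _ lip_mnorm] M s t by blast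
      show "dist (\<integral>y. norm y \<partial>\<mu> s) (\<integral>y. norm y \<partial>\<mu> t) < e"
        using 1 2 w by (simp add: dist_real_def)
    qed (use d in auto)
  qed
  then obtain t0 where "t0 \<in> {0..T}" "\<forall>t\<in>{0..T}. (\<integral>y. norm y \<partial>\<mu> t) \<le> (\<integral>y. norm y \<partial>\<mu> t0)"
    using continuous_attains_sup[of "{0..T}"] True by fastforce
  then show ?thesis by blast
qed

lemma uniq:
  fixes m :: "'a::euclidean_space measure" and Kh :: "'a \<Rightarrow> 'a" and P Q :: "real \<Rightarrow> 'a \<Rightarrow> 'a"
    and x0 :: "'a \<Rightarrow> 'a"
  assumes m: "sets m = sets borel" "emeasure m UNIV = ennreal N" and N: "N \<ge> 0"
    and h: "\<And>x y. norm (Kh x - Kh y) \<le> C * norm (x - y)" and C: "C \<ge> 0"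
    and Pm: "\<And>s. s \<in> {0..T} \<Longrightarrow> P s \<in> borel_measurable borel"
    and Qm: "\<And>s. s \<in> {0..T} \<Longrightarrow> Q s \<in> borel_measurable borel"
    and Pi: "\<And>s. s \<in> {0..T} \<Longrightarrow> integrable m (\<lambda>z. norm (P s z))"
    and Qi: "\<And>s. s \<in> {0..T} \<Longrightarrow> integrable m (\<lambda>z. norm (Q s z))"
    and PB: "\<And>s. s \<in> {0..T} \<Longrightarrow> (\<integral>z. norm (P s z) \<partial>m) \<le> B"
    and QB: "\<And>s. s \<in> {0..T} \<Longrightarrow> (\<integral>z. norm (Q s z) \<partial>m) \<le> B"
    and Peq: "\<And>t z. t \<in> {0..T} \<Longrightarrow> ((\<lambda>s. conv_vel Kh (distr m borel (P s)) (P s z)) has_integral (P t z - x0 z)) {0..t}"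
    and Qeq: "\<And>t z. t \<in> {0..T} \<Longrightarrow> ((\<lambda>s. conv_vel Kh (distr m borel (Q s)) (Q s z)) has_integral (Q t z - x0 z)) {0..t}"
  shows "\<forall>t\<in>{0..T}. P t = Q t"
proof -
  interpret finite_measure m using finite_m m by blast
  define VP where "VP z s = conv_vel Kh (distr m borel (P s)) (P s z)" for z s
  define VQ where "VQ z s = conv_vel Kh (distr m borel (Q s)) (Q s z)" for z s
  define E where "E s = (\<integral>z. norm (P s z - Q s z) \<partial>m)" for s
  have mU: "measure m (space m) = N" using m N by (simp add: space_eq_UNIV measure_def)
  have E0: "E s \<ge> 0" for s unfolding E_def by simp
  have Eint: "integrable m (\<lambda>z. norm (P s z - Q s z))" if s: "s \<in> {0..T}" for s
  proof -
    have "integrable m (P s)" using Pi[OF s] meas_m[OF m(1) Pm[OF s]] integrable_norm_iff by blast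
    moreover have "integrable m (Q s)" using Qi[OF s] meas_m[OF m(1) Qm[OF s]] integrable_norm_iff by blast
    ultimately show ?thesis by auto
  qed
  have Ele: "E s \<le> 2 * B" if s: "s \<in> {0..T}" for s
  proof -
    have "E s \<le> (\<integral>z. norm (P s z) + norm (Q s z) \<partial>m)"
      unfolding E_def using Eint[OF s] Pi[OF s] Qi[OF s]
      by (intro integral_mono) (auto simp: norm_triangle_ineq4)
    also have "\<dots> = (\<integral>z. norm (P s z) \<partial>m) + (\<integral>z. norm (Q s z) \<partial>m)"
      using Pi[OF s] Qi[OF s] by simp
    finally show ?thesis using PB[OF s] QB[OF s] by linarith
  qed
  have Vdiff: "norm (VP z s - VQ z s) \<le> C * E s + C * N * norm (P s z - Q s z)" if s: "s \<in> {0..T}" for s z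
    unfolding VP_def VQ_def E_def
    by (rule vel_diff[OF m N h C Pm[OF s] Pi[OF s] Qm[OF s] Qi[OF s]])
  have Pcomb: "(VP z has_integral (P t z - P t0 z)) {t0..t}" if "0 \<le> t0" "t0 \<le> t" "t \<le> T" for t0 t z
  proof -
    have t: "t \<in> {0..T}" and t0: "t0 \<in> {0..T}" using that by auto
    have "VP z integrable_on {0..t}" using Peq[OF t] unfolding VP_def by blast
    then have "VP z integrable_on {t0..t}" by (rule integrable_on_subinterval) (use that in auto)
    then have i: "(VP z has_integral integral {t0..t} (VP z)) {t0..t}" by blast
    have "(VP z has_integral (P t0 z - x0 z + integral {t0..t} (VP z))) {0..t}"
      by (rule has_integral_combine[OF that(1,2) _ i]) (unfold VP_def, rule Peq[OF t0])
    then have "P t z - x0 z = P t0 z - x0 z + integral {t0..t} (VP z)"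
      unfolding VP_def by (intro has_integral_unique[OF Peq[OF t]])
    then show ?thesis using i by (metis add_diff_cancel_left' diff_add_cancel add_diff_eq diff_diff_eq2)
  qed
  have Qcomb: "(VQ z has_integral (Q t z - Q t0 z)) {t0..t}" if "0 \<le> t0" "t0 \<le> t" "t \<le> T" for t0 t z
  proof -
    have t: "t \<in> {0..T}" and t0: "t0 \<in> {0..T}" using that by auto
    have "VQ z integrable_on {0..t}" using Qeq[OF t] unfolding VQ_def by blast
    then have "VQ z integrable_on {t0..t}" by (rule integrable_on_subinterval) (use that in auto)
    then have i: "(VQ z has_integral integral {t0..t} (VQ z)) {t0..t}" by blast
    have "(VQ z has_integral (Q t0 z - x0 z + integral {t0..t} (VQ z))) {0..t}"
      by (rule has_integral_combine[OF that(1,2) _ i]) (unfold VQ_def, rule Qeq[OF t0])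
    then have "Q t z - x0 z = Q t0 z - x0 z + integral {t0..t} (VQ z)"
      unfolding VQ_def by (intro has_integral_unique[OF Qeq[OF t]])
    then show ?thesis using i by (metis add_diff_cancel_left' diff_add_cancel add_diff_eq diff_diff_eq2)
  qed
  have Pcont: "continuous_on {0..T} (\<lambda>s. P s z)" "continuous_on {0..T} (\<lambda>s. Q s z)" if "0 \<le> T" for z
  proof -
    have "continuous_on {0..T} (\<lambda>s. P 0 z + integral {0..s} (VP z))"
    proof (intro continuous_intros indefinite_integral_continuous_1)
      show "VP z integrable_on {0..T}" using Peq[of T z] that unfolding VP_def by auto
    qed
    moreover have "P 0 z + integral {0..s} (VP z) = P s z" if "s \<in> {0..T}" for s
      using Pcomb[of 0 s z] that by (auto dest: integral_unique)
    ultimately show "continuous_on {0..T} (\<lambda>s. P s z)" by (rule continuous_on_eq) 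
    have "continuous_on {0..T} (\<lambda>s. Q 0 z + integral {0..s} (VQ z))"
    proof (intro continuous_intros indefinite_integral_continuous_1)
      show "VQ z integrable_on {0..T}" using Qeq[of T z] that unfolding VQ_def by auto
    qed
    moreover have "Q 0 z + integral {0..s} (VQ z) = Q s z" if "s \<in> {0..T}" for s
      using Qcomb[of 0 s z] that by (auto dest: integral_unique)
    ultimately show "continuous_on {0..T} (\<lambda>s. Q s z)" by (rule continuous_on_eq) 
  qed
  have step: "\<forall>s\<in>{t0..t1}. P s = Q s"
    if t01: "0 \<le> t0" "t0 \<le> t1" "t1 \<le> T" and small: "(t1 - t0) * C * N \<le> 1/4" and eq0: "P t0 = Q t0" for t0 t1
  proof -
    define hh where "hh = t1 - t0"
    have hh0: "hh \<ge> 0" using t01 by (simp add: hh_def)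
    define A where "A = Sup (E ` {t0..t1})"
    have bddA: "bdd_above (E ` {t0..t1})"
      by (rule bdd_aboveI2[where M="2*B"]) (rule Ele, use t01 in auto)
    have EA: "E s \<le> A" if "s \<in> {t0..t1}" for s
      unfolding A_def using bddA that by (intro cSUP_upper) auto
    have A0: "A \<ge> 0" using EA[of t0] E0[of t0] t01 by auto
    have k0: "hh * C * N \<ge> 0" using hh0 C N by simp
    have k: "hh * C * N \<le> 1/4" using small by (simp add: hh_def)
    have claim1: "norm (P s z - Q s z) \<le> 2 * (hh * C * A)" if s: "s \<in> {t0..t1}" for s z
    proof -
      have ct: "continuous_on {t0..t1} (\<lambda>s. norm (P s z - Q s z))"
      proof -
        have T0: "0 \<le> T" using t01 by simp
        have sub: "{t0..t1} \<subseteq> {0..T}" using t01 by auto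
        have "continuous_on {t0..t1} (\<lambda>s. P s z)" by (rule continuous_on_subset[OF Pcont(1)[OF T0] sub])
        moreover have "continuous_on {t0..t1} (\<lambda>s. Q s z)" by (rule continuous_on_subset[OF Pcont(2)[OF T0] sub])
        ultimately show ?thesis by (intro continuous_intros)
      qed
      obtain ss where ss: "ss \<in> {t0..t1}" "\<forall>y\<in>{t0..t1}. norm (P y z - Q y z) \<le> norm (P ss z - Q ss z)"
        using continuous_attains_sup[OF compact_Icc _ ct] t01 by auto
      define M where "M = norm (P ss z - Q ss z)"
      have M0: "M \<ge> 0" by (simp add: M_def)
      have bound: "norm (P t z - Q t z) \<le> (C * A + C * N * M) * hh" if t: "t \<in> {t0..t1}" for t
      proof -
        have eqt0: "P t0 z = Q t0 z" using eq0 by simp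
        have hi: "((\<lambda>r. VP z r - VQ z r) has_integral (P t z - Q t z)) {t0..t}"
          using has_integral_diff[OF Pcomb[of t0 t z] Qcomb[of t0 t z]] t t01 eqt0 by (simp add: algebra_simps)
        have "norm (P t z - Q t z) \<le> (C * A + C * N * M) * Henstock_Kurzweil_Integration.content {t0..t}"
        proof (rule has_integral_bound_real[OF _ _ hi, where S="{}"])
          show "0 \<le> C * A + C * N * M" using C N A0 M0 by simp
          fix r assume r: "r \<in> {t0..t} - {}"
          then have r': "r \<in> {t0..t1}" "r \<in> {0..T}" using t t01 by auto
          have "norm (VP z r - VQ z r) \<le> C * E r + C * N * norm (P r z - Q r z)" by (rule Vdiff[OF r'(2)])
          also have "\<dots> \<le> C * A + C * N * M"
            using EA[OF r'(1)] ss(2) r'(1) C N unfolding M_def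
            by (intro add_mono mult_left_mono) (auto intro: mult_nonneg_nonneg)
          finally show "norm (VP z r - VQ z r) \<le> C * A + C * N * M" .
        qed simp
        also have "\<dots> \<le> (C * A + C * N * M) * hh"
          using t C N A0 M0 by (intro mult_left_mono) (auto simp: hh_def)
        finally show ?thesis .
      qed
      have "M \<le> (C * A + C * N * M) * hh" using bound[OF ss(1)] by (simp add: M_def)
      also have "\<dots> = hh * C * A + (hh * C * N) * M" by (simp add: algebra_simps)
      also have "\<dots> \<le> hh * C * A + (1/4) * M" using k M0 by (intro add_left_mono mult_right_mono) auto
      finally have "M \<le> hh * C * A + (1/4) * M" .
      moreover have "hh * C * A \<ge> 0" using hh0 C A0 by simp
      ultimately have "M \<le> 2 * (hh * C * A)" by linarith
      then show ?thesis using ss(2) s unfolding M_def by fastforce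
    qed
    have EA2: "E s \<le> A / 2" if s: "s \<in> {t0..t1}" for s
    proof -
      have sT: "s \<in> {0..T}" using s t01 by auto
      have "E s \<le> (\<integral>z. 2 * (hh * C * A) \<partial>m)"
        unfolding E_def using Eint[OF sT] claim1[OF s] by (intro integral_mono) auto
      also have "\<dots> = 2 * (hh * C * N) * A" using mU by (simp add: algebra_simps)
      also have "\<dots> \<le> 2 * (1/4) * A" using k A0 by (intro mult_right_mono) auto
      finally show ?thesis by simp
    qed
    have "A \<le> A / 2" unfolding A_def using t01 EA2 by (intro cSUP_least) (auto simp: A_def)
    then have A00: "A = 0" using A0 by simp
    show ?thesis
    proof
      fix s assume s: "s \<in> {t0..t1}"
      show "P s = Q s"
      proof
        fix z show "P s z = Q s z" using claim1[OF s, of z] A00 by simp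
      qed
    qed
  qed
  have init: "P 0 = Q 0" if T0: "0 \<le> T"
  proof
    fix z
    have i1: "((\<lambda>s. conv_vel Kh (distr m borel (P s)) (P s z)) has_integral (P 0 z - x0 z)) {0}"
      using Peq[of 0 z] T0 by simp
    have i2: "((\<lambda>s. conv_vel Kh (distr m borel (Q s)) (Q s z)) has_integral (Q 0 z - x0 z)) {0}"
      using Qeq[of 0 z] T0 by simp
    have "P 0 z - x0 z = 0" using has_integral_unique[OF i1 has_integral_refl(2)] .
    moreover have "Q 0 z - x0 z = 0" using has_integral_unique[OF i2 has_integral_refl(2)] .
    ultimately show "P 0 z = Q 0 z" by simp
  qed
  define h0 where "h0 = 1 / (4 * (C * N + 1))"
  have CN: "C * N \<ge> 0" using C N by simp
  have h0pos: "h0 > 0" using CN by (simp add: h0_def)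
  have h0k: "h0 * C * N \<le> 1/4"
  proof -
    have "h0 * C * N = (C * N) / (4 * (C * N + 1))" by (simp add: h0_def)
    also have "\<dots> \<le> 1/4" using CN by (simp add: field_simps)
    finally show ?thesis .
  qed
  have ind: "\<forall>s\<in>{0..T}. s \<le> real k * h0 \<longrightarrow> P s = Q s" for k :: nat
  proof (induction k)
    case 0
    show ?case
    proof (intro ballI impI)
      fix s assume "s \<in> {0..T}" "s \<le> real 0 * h0"
      then have "s = 0" "0 \<le> T" by auto
      then show "P s = Q s" using init by simp
    qed
  next
    case (Suc k)
    show ?case
    proof (intro ballI impI)
      fix s assume s: "s \<in> {0..T}" and sk: "s \<le> real (Suc k) * h0"
      show "P s = Q s"
      proof (cases "s \<le> real k * h0")
        case True then show ?thesis using Suc.IH s by blast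
      next
        case False
        define t0 where "t0 = real k * h0"
        define t1 where "t1 = min T (real (Suc k) * h0)"
        have t0: "0 \<le> t0" "t0 \<le> t1" "t1 \<le> T" "t0 \<le> s" "s \<le> t1"
          using False s sk h0pos by (auto simp: t0_def t1_def)
        have "t1 - t0 \<le> h0" by (simp add: t0_def t1_def algebra_simps)
        then have "(t1 - t0) * C * N \<le> h0 * C * N"
          using CN by (simp add: mult.assoc mult_right_mono)
        then have sm: "(t1 - t0) * C * N \<le> 1/4" using h0k by linarith
        have "P t0 = Q t0" using Suc.IH t0 by (auto simp: t0_def)
        then show ?thesis using step[OF t0(1-3) sm] t0(4,5) by auto
      qed
    qed
  qed
  show ?thesis
  proof
    fix t assume t: "t \<in> {0..T}"
    have "t / h0 \<le> real (nat \<lceil>t / h0\<rceil>)" by (rule real_nat_ceiling_ge)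
    then have "t \<le> real (nat \<lceil>t / h0\<rceil>) * h0" using h0pos by (simp add: divide_le_eq)
    then show "P t = Q t" using ind t by blast
  qed
qed

lemma sol_parts:
  assumes "is_solution N T v mubar \<mu> \<gamma>" "t \<in> {0..T}"
  shows "\<gamma> t \<in> borel_measurable borel" "\<mu> t = pushfwd (\<gamma> t) mubar" "\<mu> t \<in> M1N N" "mubar \<in> M1N N"
    "((\<lambda>s. v (\<mu> s) (\<gamma> s x)) has_integral (\<gamma> t x - x)) {0..t}"
proof -
  have c: "mubar \<in> M1N N \<and>
     (\<forall>t\<in>{0..T}. \<mu> t \<in> M1N N) \<and>
     (\<forall>t\<in>{0..T}. \<forall>\<epsilon>>0. \<exists>\<delta>>0. \<forall>s\<in>{0..T}. \<bar>s - t\<bar> < \<delta> \<longrightarrow> W1 (\<mu> s) (\<mu> t) < \<epsilon>) \<and>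
     (\<forall>t\<in>{0..T}. \<gamma> t \<in> borel_measurable borel) \<and>
     (\<forall>t\<in>{0..T}. \<mu> t = pushfwd (\<gamma> t) mubar) \<and>
     (\<forall>t\<in>{0..T}. \<forall>x. ((\<lambda>s. v (\<mu> s) (\<gamma> s x)) has_integral (\<gamma> t x - x)) {0..t})"
    using assms(1) unfolding is_solution_def .
  have A1: "mubar \<in> M1N N" using c by (rule conjunct1)
  have A2: "\<forall>t\<in>{0..T}. \<mu> t \<in> M1N N" using c[THEN conjunct2] by (rule conjunct1)
  have A3: "\<forall>t\<in>{0..T}. \<gamma> t \<in> borel_measurable borel" using c[THEN conjunct2, THEN conjunct2, THEN conjunct2] by (rule conjunct1)
  have A4: "\<forall>t\<in>{0..T}. \<mu> t = pushfwd (\<gamma> t) mubar" using c[THEN conjunct2, THEN conjunct2, THEN conjunct2, THEN conjunct2] by (rule conjunct1)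
  have A5: "\<forall>t\<in>{0..T}. \<forall>x. ((\<lambda>s. v (\<mu> s) (\<gamma> s x)) has_integral (\<gamma> t x - x)) {0..t}"
    using c[THEN conjunct2, THEN conjunct2, THEN conjunct2, THEN conjunct2] by (rule conjunct2)
  note A = A1 A2 A3 A4 A5
  show "\<gamma> t \<in> borel_measurable borel" "\<mu> t = pushfwd (\<gamma> t) mubar" "\<mu> t \<in> M1N N" "mubar \<in> M1N N"
    "((\<lambda>s. v (\<mu> s) (\<gamma> s x)) has_integral (\<gamma> t x - x)) {0..t}"
    using A assms(2) by auto
qed

theorem mainTheorem6:
  fixes N T a :: real
    and K Khat Ktil U :: "'a::euclidean_space \<Rightarrow> 'a"
    and muhat mutil :: "real \<Rightarrow> 'a measure"
    and gammahat gammatil :: "real \<Rightarrow> 'a \<Rightarrow> 'a"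
  assumes "N \<ge> 1" and "T > 0" and "a \<noteq> 0"
    and "U = (\<lambda>z. a *\<^sub>R z)"
    and "\<exists>C. C-lipschitz_on UNIV K"
    and "Khat = (\<lambda>z. K (z /\<^sub>R a))"
    and "Ktil = (\<lambda>z. (1 / a) *\<^sub>R K z)"
    and "is_solution N T (conv_vel Khat) (muhat 0) muhat gammahat"
    and "is_solution N T (conv_vel Ktil) (mutil 0) mutil gammatil"
    and "muhat 0 = pushfwd U (mutil 0)"
  shows "(\<forall>\<mu>\<in>M1N N. \<forall>x. conv_vel Ktil \<mu> x = (1 / a) *\<^sub>R conv_vel Khat (pushfwd U \<mu>) (a *\<^sub>R x))
       \<and> (\<forall>t\<in>{0<..T}. gammahat t = U \<circ> gammatil t \<circ> inv U)
       \<and> (\<forall>t\<in>{0<..T}. muhat t = pushfwd U (mutil t))"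
proof -
  note N1 = assms(1) and a0 = assms(3) and Udef = assms(4) and Khd = assms(6) and Ktd = assms(7)
    and solh = assms(8) and solt = assms(9) and init = assms(10)
  obtain C where CK: "C-lipschitz_on UNIV K" using assms(5) by blast
  have C0: "C \<ge> 0" using lipschitz_on_nonneg[OF CK] .
  have Klip: "norm (K x - K y) \<le> C * norm (x - y)" for x y
    using lipschitz_onD[OF CK, of x y] by (simp add: dist_norm)
  define Ch where "Ch = C / \<bar>a\<bar>"
  have Ch0: "Ch \<ge> 0" using C0 by (simp add: Ch_def)
  have Khlip: "norm (Khat x - Khat y) \<le> Ch * norm (x - y)" for x y
  proof -
    have "norm (Khat x - Khat y) \<le> C * norm (x /\<^sub>R a - y /\<^sub>R a)" unfolding Khd by (rule Klip)
    also have "x /\<^sub>R a - y /\<^sub>R a = (1/a) *\<^sub>R (x - y)" by (simp add: scaleR_diff_right inverse_eq_divide)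
    also have "C * norm ((1/a) *\<^sub>R (x - y)) = Ch * norm (x - y)" by (simp add: Ch_def)
    finally show ?thesis .
  qed
  have Kb: "K \<in> borel_measurable borel" using lip_cont[OF Klip] borel_measurable_continuous_onI by blast
  have Khb: "Khat \<in> borel_measurable borel" using lip_cont[OF Khlip] borel_measurable_continuous_onI by blast
  have Ub: "U \<in> borel_measurable borel" unfolding Udef by (intro borel_measurable_continuous_onI continuous_intros)
  have Ui: "U z = a *\<^sub>R z" for z using Udef by simp
  have part1: "conv_vel Ktil \<mu> x = (1 / a) *\<^sub>R conv_vel Khat (pushfwd U \<mu>) (a *\<^sub>R x)" if mu: "\<mu> \<in> M1N N" for \<mu> x
  proof -
    have sm: "sets \<mu> = sets borel" using mu by (simp add: M1N_def)
    have "conv_vel Khat (pushfwd U \<mu>) (a *\<^sub>R x) = - (\<integral>y. Khat (U y - a *\<^sub>R x) \<partial>\<mu>)"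
      unfolding pushfwd_def by (rule conv_vel_distr[OF sm Ub Khb])
    also have "(\<lambda>y. Khat (U y - a *\<^sub>R x)) = (\<lambda>y. K (y - x))"
    proof
      fix y
      have "U y - a *\<^sub>R x = a *\<^sub>R (y - x)" by (simp add: Ui scaleR_diff_right)
      then show "Khat (U y - a *\<^sub>R x) = K (y - x)" using a0 by (simp add: Khd)
    qed
    finally have "conv_vel Khat (pushfwd U \<mu>) (a *\<^sub>R x) = - (\<integral>y. K (y - x) \<partial>\<mu>)" .
    then show ?thesis unfolding conv_vel_def Ktd by simp
  qed
  define m where "m = mutil 0"
  have mM: "m \<in> M1N N" using sol_parts(4)[OF solt, of 0] assms(2) unfolding m_def by simp
  have ms: "sets m = sets borel" "emeasure m UNIV = ennreal N" using mM by (auto simp: M1N_def)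
  have N0: "N \<ge> 0" using N1 by simp
  define P where "P s = gammahat s \<circ> U" for s
  define Q where "Q s = U \<circ> gammatil s" for s
  have gh: "gammahat s \<in> borel_measurable borel" "muhat s = pushfwd (gammahat s) (muhat 0)"
    "muhat s \<in> M1N N" if "s \<in> {0..T}" for s
    using sol_parts[OF solh that] by blast+
  have gt: "gammatil s \<in> borel_measurable borel" "mutil s = pushfwd (gammatil s) (mutil 0)"
    "mutil s \<in> M1N N" if "s \<in> {0..T}" for s
    using sol_parts[OF solt that] by blast+
  have Pm: "P s \<in> borel_measurable borel" if "s \<in> {0..T}" for s
    unfolding P_def using gh(1)[OF that] Ub by (rule measurable_comp[rotated])
  have Qm: "Q s \<in> borel_measurable borel" if "s \<in> {0..T}" for s
    unfolding Q_def using Ub gt(1)[OF that] by (rule measurable_comp[rotated])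
  have Um: "U \<in> measurable m borel" using meas_m[OF ms(1) Ub] .
  have Pd: "distr m borel (P s) = muhat s" if s: "s \<in> {0..T}" for s
  proof -
    have "muhat s = distr (distr m borel U) borel (gammahat s)"
      using gh(2)[OF s] init by (simp add: pushfwd_def m_def)
    also have "\<dots> = distr m borel (P s)"
      unfolding P_def by (rule distr_distr[OF gh(1)[OF s] Um])
    finally show ?thesis by simp
  qed
  have Qd: "distr m borel (Q s) = pushfwd U (mutil s)" if s: "s \<in> {0..T}" for s
  proof -
    have gm: "gammatil s \<in> measurable m borel" using meas_m[OF ms(1) gt(1)[OF s]] .
    have "pushfwd U (mutil s) = distr (distr m borel (gammatil s)) borel U"
      using gt(2)[OF s] by (simp add: pushfwd_def m_def)
    also have "\<dots> = distr m borel (Q s)"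
      unfolding Q_def by (rule distr_distr[OF Ub gm])
    finally show ?thesis by simp
  qed
  have nb: "(\<lambda>y::'a. norm y) \<in> borel_measurable borel" by simp
  have Pi: "integrable m (\<lambda>z. norm (P s z))" and PI: "(\<integral>z. norm (P s z) \<partial>m) = (\<integral>y. norm y \<partial>muhat s)"
    if s: "s \<in> {0..T}" for s
  proof -
    have pm: "P s \<in> measurable m borel" using meas_m[OF ms(1) Pm[OF s]] .
    have "integrable (muhat s) norm" using gh(3)[OF s] by (simp add: M1N_def)
    then show "integrable m (\<lambda>z. norm (P s z))"
      using integrable_distr_eq[OF pm nb] Pd[OF s] by simp
    show "(\<integral>z. norm (P s z) \<partial>m) = (\<integral>y. norm y \<partial>muhat s)"
      using integral_distr[OF pm nb] Pd[OF s] by simp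
  qed
  have Qi: "integrable m (\<lambda>z. norm (Q s z))" and QI: "(\<integral>z. norm (Q s z) \<partial>m) = \<bar>a\<bar> * (\<integral>y. norm y \<partial>mutil s)"
    if s: "s \<in> {0..T}" for s
  proof -
    have gm: "gammatil s \<in> measurable m borel" using meas_m[OF ms(1) gt(1)[OF s]] .
    have d: "distr m borel (gammatil s) = mutil s" using gt(2)[OF s] by (simp add: pushfwd_def m_def)
    have "integrable (mutil s) norm" using gt(3)[OF s] by (simp add: M1N_def)
    then have "integrable m (\<lambda>z. norm (gammatil s z))"
      using integrable_distr_eq[OF gm nb] d by simp
    then have "integrable m (\<lambda>z. \<bar>a\<bar> * norm (gammatil s z))" by simp
    then show "integrable m (\<lambda>z. norm (Q s z))" by (simp add: Q_def Ui)
    have "(\<integral>z. norm (Q s z) \<partial>m) = (\<integral>z. \<bar>a\<bar> * norm (gammatil s z) \<partial>m)" by (simp add: Q_def Ui)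
    also have "\<dots> = \<bar>a\<bar> * (\<integral>z. norm (gammatil s z) \<partial>m)" by simp
    also have "(\<integral>z. norm (gammatil s z) \<partial>m) = (\<integral>y. norm y \<partial>mutil s)"
      using integral_distr[OF gm nb] d by simp
    finally show "(\<integral>z. norm (Q s z) \<partial>m) = \<bar>a\<bar> * (\<integral>y. norm y \<partial>mutil s)" .
  qed
  obtain Bh where Bh: "\<forall>t\<in>{0..T}. (\<integral>y. norm y \<partial>muhat t) \<le> Bh" using moment_bound[OF solh] by blast
  obtain Bt where Bt: "\<forall>t\<in>{0..T}. (\<integral>y. norm y \<partial>mutil t) \<le> Bt" using moment_bound[OF solt] by blast
  define B where "B = max Bh (\<bar>a\<bar> * Bt)"
  have PB: "(\<integral>z. norm (P s z) \<partial>m) \<le> B" if s: "s \<in> {0..T}" for s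
  proof -
    have "(\<integral>y. norm y \<partial>muhat s) \<le> Bh" using Bh s by blast
    then show ?thesis using PI[OF s] by (simp add: B_def)
  qed
  have QB: "(\<integral>z. norm (Q s z) \<partial>m) \<le> B" if s: "s \<in> {0..T}" for s
  proof -
    have "\<bar>a\<bar> * (\<integral>y. norm y \<partial>mutil s) \<le> \<bar>a\<bar> * Bt" using Bt s by (intro mult_left_mono) auto
    then show ?thesis using QI[OF s] by (simp add: B_def)
  qed
  have Peq: "((\<lambda>s. conv_vel Khat (distr m borel (P s)) (P s z)) has_integral (P t z - U z)) {0..t}"
    if t: "t \<in> {0..T}" for t z
  proof -
    have H: "((\<lambda>s. conv_vel Khat (muhat s) (gammahat s (U z))) has_integral (gammahat t (U z) - U z)) {0..t}"
      by (rule sol_parts(5)[OF solh t])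
    have eqs: "conv_vel Khat (distr m borel (P s)) (P s z) = conv_vel Khat (muhat s) (gammahat s (U z))"
      if "s \<in> {0..t}" for s using Pd[of s] that t by (simp add: P_def)
    have cong: "((\<lambda>s. conv_vel Khat (distr m borel (P s)) (P s z)) has_integral i) {0..t} =
      ((\<lambda>s. conv_vel Khat (muhat s) (gammahat s (U z))) has_integral i) {0..t}" for i
      by (rule has_integral_cong) (rule eqs)
    have Pt: "P t z - U z = gammahat t (U z) - U z" by (simp add: P_def)
    show ?thesis unfolding cong Pt by (rule H)
  qed
  have Qeq: "((\<lambda>s. conv_vel Khat (distr m borel (Q s)) (Q s z)) has_integral (Q t z - U z)) {0..t}"
    if t: "t \<in> {0..T}" for t z
  proof -
    have "((\<lambda>s. conv_vel Ktil (mutil s) (gammatil s z)) has_integral (gammatil t z - z)) {0..t}"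
      by (rule sol_parts(5)[OF solt t])
    then have H: "((\<lambda>s. a *\<^sub>R conv_vel Ktil (mutil s) (gammatil s z)) has_integral (a *\<^sub>R (gammatil t z - z))) {0..t}"
      by (rule has_integral_cmul)
    have eqs: "conv_vel Khat (distr m borel (Q s)) (Q s z) = a *\<^sub>R conv_vel Ktil (mutil s) (gammatil s z)"
      if "s \<in> {0..t}" for s
    proof -
      have s: "s \<in> {0..T}" using that t by auto
      show ?thesis using part1[OF gt(3)[OF s], of "gammatil s z"] Qd[OF s] a0 by (simp add: Q_def Ui)
    qed
    have cong: "((\<lambda>s. conv_vel Khat (distr m borel (Q s)) (Q s z)) has_integral i) {0..t} =
      ((\<lambda>s. a *\<^sub>R conv_vel Ktil (mutil s) (gammatil s z)) has_integral i) {0..t}" for i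
      by (rule has_integral_cong) (rule eqs)
    have Qt: "Q t z - U z = a *\<^sub>R (gammatil t z - z)" by (simp add: Q_def Ui scaleR_diff_right)
    show ?thesis unfolding cong Qt by (rule H)
  qed
  have PQ: "\<forall>t\<in>{0..T}. P t = Q t"
    by (rule uniq[OF ms N0 Khlip Ch0 Pm Qm Pi Qi PB QB Peq Qeq])
  have injU: "inj U" unfolding Udef using a0 by (intro injI) simp
  have invU: "inv U x = x /\<^sub>R a" for x using a0 by (intro inv_f_eq[OF injU]) (simp add: Ui)
  have part2: "gammahat t = U \<circ> gammatil t \<circ> inv U" if t: "t \<in> {0..T}" for t
  proof
    fix x
    have "gammahat t x = P t (x /\<^sub>R a)" using a0 by (simp add: P_def Ui)
    also have "\<dots> = Q t (x /\<^sub>R a)" using PQ t by simp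
    finally show "gammahat t x = (U \<circ> gammatil t \<circ> inv U) x" by (simp add: Q_def invU)
  qed
  have part3: "muhat t = pushfwd U (mutil t)" if t: "t \<in> {0..T}" for t
    using Pd[OF t] Qd[OF t] PQ t by simp
  show ?thesis using part1 part2 part3 by auto
qed

end
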